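(* Let $\nu>0$ and let $K\in\mathbb N$ be fixed, with index set $\mathcal K=\{(k_1,k_2)\in\mathbb Z^2\setminus\{0\}: -K\le k_1,k_2\le K\}$. Let $f$ be a real, $2\pi$-periodic, divergence-free, mean-zero body force on $[0,2\pi]^2$ whose Fourier coefficients vanish outside $\{k\in\mathcal K: |k|^2\le \lambda_M\}$ for some $\lambda_M\ge 1$. Let $g=\operatorname{curl} f$ with Fourier coefficients $g_k$, and set $\lambda_0=\min\{|k|^2:k\in\mathcal K\}=1$. For a real trigonometric polynomial $\omega(x)=\sum_{k\in\mathcal K}\omega_k e^{ik\cdot x}$ (so $\omega_{-k}=\overline{\omega_k}$) define $u(x)=\sum_{k\in\mathcal K}\frac{i(k_2,-k_1)}{|k|^2}\omega_k e^{ik\cdot x}$ and $|\omega|^2=\|\omega\|_{L^2}^2=4\pi^2\sum_{k\in\mathcal K}|\omega_k|^2$. For a time step $h>0$ define the map $S$ by $$S(\omega)_k=\big\{\omega_k-h\,(u\cdot\nabla\omega)_k\big\}e^{-\nu|k|^2h}+\frac{2g_k}{\nu|k|^2}e^{-\nu|k|^2h/2}\sinh(\nu|k|^2h/2),\qquad k\in\mathcal K,$$ where $(u\cdot\nabla\omega)_k$ denotes the $k$-th Fourier coefficient of $u\cdot\nabla\omega$ (only $k\in\mathcal K$ are retained), and let $\omega^{n+1}=S(\omega^n)$ for $n=0,1,2,\dots$. Let $$B=c_0\frac{\|f\|_{L^2}}{\nu\lambda_0^{1/2}}\qquad\text{with}\qquad c_0>6\lambda_M/\lambda_0 .$$ Then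 for every $L>0$ there exist $h>0$ sufficiently small and $N\in\mathbb N$ sufficiently large (depending on $L$, $K$, $\nu$, $\lambda_M$, $c_0$, $f$) such that for every initial datum $\omega^0$ with $|\omega^0|<L$ one has $|\omega^n|<B$ for all $n\ge N$.
   Context: This is a fully dealiased spectral Galerkin discretization of the two-dimensional incompressible Navier–Stokes equations in vorticity form $\partial_t\omega-\nu\Delta\omega+u\cdot\nabla\omega=g$ on the $2\pi$-periodic box, with linear terms integrated exactly in time and the nonlinear term by the forward Euler method. Here $\operatorname{curl}u=\partial u_2/\partial x_1-\partial u_1/\partial x_2$. *)

theory Defs
  imports "HOL-Analysis.Analysis"
begin

definition Kset :: "nat \<Rightarrow> (int \<times> int) set" where
  "Kset K = {k. k \<noteq> (0,0) \<and> \<bar>fst k\<bar> \<le> int K \<and> \<bar>snd k\<bar> \<le> int K}"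

definition ksq :: "int \<times> int \<Rightarrow> real" where
  "ksq k = real_of_int (fst k ^ 2 + snd k ^ 2)"

definition kneg :: "int \<times> int \<Rightarrow> int \<times> int" where
  "kneg k = (- fst k, - snd k)"

definition lambda0 :: "nat \<Rightarrow> real" where
  "lambda0 K = Min (ksq ` Kset K)"

text \<open>A body force is given by its Fourier coefficients f_k in C^2 (both components).
  Admissible: real, divergence-free, mean-zero, supported in {k in \<K> : |k|^2 <= lambda_M}.\<close>
definition force_ok :: "nat \<Rightarrow> real \<Rightarrow> (int \<times> int \<Rightarrow> complex \<times> complex) \<Rightarrow> bool" where
  "force_ok K lamM f \<longleftrightarrow>
     (\<forall>k. (k \<notin> Kset K \<or> ksq k > lamM) \<longrightarrow> f k = (0, 0)) \<and>
     f (0,0) = (0,0) \<and>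
     (\<forall>k. f (kneg k) = (cnj (fst (f k)), cnj (snd (f k)))) \<and>
     (\<forall>k. of_int (fst k) * fst (f k) + of_int (snd k) * snd (f k) = 0)"

text \<open>||f||_{L^2} on [0,2pi]^2 via Parseval.\<close>
definition force_norm :: "nat \<Rightarrow> (int \<times> int \<Rightarrow> complex \<times> complex) \<Rightarrow> real" where
  "force_norm K f = 2 * pi * sqrt (\<Sum>k\<in>Kset K. (cmod (fst (f k)))\<^sup>2 + (cmod (snd (f k)))\<^sup>2)"

definition curl_coef :: "(int \<times> int \<Rightarrow> complex \<times> complex) \<Rightarrow> int \<times> int \<Rightarrow> complex" where
  "curl_coef f k = \<i> * of_int (fst k) * snd (f k) - \<i> * of_int (snd k) * fst (f k)"

definition trig_poly :: "nat \<Rightarrow> (int \<times> int \<Rightarrow> complex) \<Rightarrow> bool" where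
  "trig_poly K \<omega> \<longleftrightarrow> (\<forall>k. k \<notin> Kset K \<longrightarrow> \<omega> k = 0) \<and> (\<forall>k. \<omega> (kneg k) = cnj (\<omega> k))"

definition vnorm :: "nat \<Rightarrow> (int \<times> int \<Rightarrow> complex) \<Rightarrow> real" where
  "vnorm K \<omega> = sqrt (4 * pi\<^sup>2 * (\<Sum>k\<in>Kset K. (cmod (\<omega> k))\<^sup>2))"

definition vel1 :: "(int \<times> int \<Rightarrow> complex) \<Rightarrow> int \<times> int \<Rightarrow> complex" where
  "vel1 \<omega> k = \<i> * of_int (snd k) / of_real (ksq k) * \<omega> k"
definition vel2 :: "(int \<times> int \<Rightarrow> complex) \<Rightarrow> int \<times> int \<Rightarrow> complex" where
  "vel2 \<omega> k = \<i> * of_int (- fst k) / of_real (ksq k) * \<omega> k"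

definition nonlin :: "nat \<Rightarrow> (int \<times> int \<Rightarrow> complex) \<Rightarrow> int \<times> int \<Rightarrow> complex" where
  "nonlin K \<omega> m = (\<Sum>k\<in>Kset K. \<Sum>l\<in>Kset K.
      if fst k + fst l = fst m \<and> snd k + snd l = snd m
      then vel1 \<omega> k * (\<i> * of_int (fst l) * \<omega> l) + vel2 \<omega> k * (\<i> * of_int (snd l) * \<omega> l)
      else 0)"

definition stepS :: "nat \<Rightarrow> real \<Rightarrow> (int \<times> int \<Rightarrow> complex) \<Rightarrow> real \<Rightarrow>
    (int \<times> int \<Rightarrow> complex) \<Rightarrow> (int \<times> int \<Rightarrow> complex)" where
  "stepS K \<nu> g h \<omega> = (\<lambda>k. if k \<in> Kset K then
      (\<omega> k - of_real h * nonlin K \<omega> k) * of_real (exp (- \<nu> * ksq k * h))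
      + 2 * g k / of_real (\<nu> * ksq k) * of_real (exp (- \<nu> * ksq k * h / 2) * sinh (\<nu> * ksq k * h / 2))
    else 0)"

end

theory Submission
  imports Defs
begin

lemma finite_Kset: "finite (Kset K)"
proof -
  have "Kset K \<subseteq> {-int K..int K} \<times> {-int K..int K}"
    unfolding Kset_def by auto
  then show ?thesis by (rule finite_subset) auto
qed

lemma ksq_ge1: "k \<in> Kset K \<Longrightarrow> ksq k \<ge> 1"
proof -
  assume "k \<in> Kset K"
  then have "fst k \<noteq> 0 \<or> snd k \<noteq> 0" unfolding Kset_def by (cases k) auto
  then have "fst k ^ 2 + snd k ^ 2 \<ge> (1::int)"
    by (smt (verit) power2_less_eq_zero_iff zero_le_power2 zero_less_power2 int_one_le_iff_zero_less)
  then show ?thesis unfolding ksq_def by (metis of_int_1 of_int_le_iff)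
qed

lemma kneg_Kset: "k \<in> Kset K \<longleftrightarrow> kneg k \<in> Kset K"
  unfolding Kset_def kneg_def by (cases k) auto

lemma kneg_kneg[simp]: "kneg (kneg k) = k" unfolding kneg_def by simp
lemma ksq_kneg[simp]: "ksq (kneg k) = ksq k" unfolding kneg_def ksq_def by simp

definition padd :: "int \<times> int \<Rightarrow> int \<times> int \<Rightarrow> int \<times> int" where
  "padd k l = (fst k + fst l, snd k + snd l)"
definition cf :: "int \<times> int \<Rightarrow> int \<times> int \<Rightarrow> real" where
  "cf k l = - real_of_int (snd k * fst l - fst k * snd l) / ksq k"

lemma nonlin_alt: "nonlin K \<omega> m = (\<Sum>k\<in>Kset K. \<Sum>l\<in>Kset K.
   if padd k l = m then of_real (cf k l) * \<omega> k * \<omega> l else 0)"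
  unfolding nonlin_def
proof (intro sum.cong refl)
  fix k l assume "k \<in> Kset K" "l \<in> Kset K"
  then have "ksq k \<noteq> 0" using ksq_ge1[of k K] by linarith
  then show "(if fst k + fst l = fst m \<and> snd k + snd l = snd m
        then vel1 \<omega> k * (\<i> * of_int (fst l) * \<omega> l) + vel2 \<omega> k * (\<i> * of_int (snd l) * \<omega> l) else 0) =
       (if padd k l = m then complex_of_real (cf k l) * \<omega> k * \<omega> l else 0)"
    unfolding padd_def cf_def vel1_def vel2_def
    by (cases m) (auto simp: field_simps)
qed

lemma cf_bound: "k \<in> Kset K \<Longrightarrow> l \<in> Kset K \<Longrightarrow> \<bar>cf k l\<bar> \<le> 2 * real K ^ 2"
proof -
  assume k: "k \<in> Kset K" and l: "l \<in> Kset K"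
  have a: "\<bar>real_of_int (fst k)\<bar> \<le> real K" "\<bar>real_of_int (snd k)\<bar> \<le> real K"
    "\<bar>real_of_int (fst l)\<bar> \<le> real K" "\<bar>real_of_int (snd l)\<bar> \<le> real K"
    using k l unfolding Kset_def by (auto simp del: of_int_abs simp add: of_int_abs[symmetric])
  have b1: "\<bar>real_of_int (snd k) * real_of_int (fst l)\<bar> \<le> real K * real K" unfolding abs_mult
    using a by (intro mult_mono) auto
  have b2: "\<bar>real_of_int (fst k) * real_of_int (snd l)\<bar> \<le> real K * real K" unfolding abs_mult
    using a by (intro mult_mono) auto
  have t: "\<bar>real_of_int (snd k) * real_of_int (fst l) - real_of_int (fst k) * real_of_int (snd l)\<bar>
     \<le> \<bar>real_of_int (snd k) * real_of_int (fst l)\<bar> + \<bar>real_of_int (fst k) * real_of_int (snd l)\<bar>"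
    by (rule abs_triangle_ineq4)
  have e: "real K * real K + real K * real K = 2 * real K ^ 2" by (simp add: power2_eq_square)
  have b: "\<bar>real_of_int (snd k * fst l - fst k * snd l)\<bar> \<le> 2 * real K ^ 2"
    using t b1 b2 e by simp
  have g: "ksq k \<ge> 1" using ksq_ge1 k by auto
  have "\<bar>cf k l\<bar> = \<bar>real_of_int (snd k * fst l - fst k * snd l)\<bar> / ksq k"
    unfolding cf_def using g by simp
  also have "\<dots> \<le> \<bar>real_of_int (snd k * fst l - fst k * snd l)\<bar> / 1"
    using g by (intro divide_left_mono) auto
  finally show ?thesis using b by simp
qed


lemma sum_kneg: "(\<Sum>k\<in>Kset K. F (kneg k)) = (\<Sum>k\<in>Kset K. F k)"
  by (rule sum.reindex_bij_witness[where i=kneg and j=kneg]) (auto simp: kneg_Kset[symmetric])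

lemma nonlin_kneg:
  assumes tp: "trig_poly K \<omega>"
  shows "nonlin K \<omega> (kneg m) = cnj (nonlin K \<omega> m)"
proof -
  have c: "\<omega> (kneg k) = cnj (\<omega> k)" for k using tp unfolding trig_poly_def by blast
  have p: "padd (kneg k) (kneg l) = kneg m \<longleftrightarrow> padd k l = m" for k l
    unfolding padd_def kneg_def by (cases m) auto
  have cfk: "cf (kneg k) (kneg l) = cf k l" for k l unfolding cf_def kneg_def ksq_def by simp
  have "nonlin K \<omega> (kneg m) = (\<Sum>k\<in>Kset K. \<Sum>l\<in>Kset K.
      if padd (kneg k) (kneg l) = kneg m then of_real (cf (kneg k) (kneg l)) * \<omega> (kneg k) * \<omega> (kneg l) else 0)"
    unfolding nonlin_alt
    by (subst sum_kneg[symmetric], rule sum.cong, rule refl, subst sum_kneg[symmetric], rule refl)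
  also have "\<dots> = (\<Sum>k\<in>Kset K. \<Sum>l\<in>Kset K.
      cnj (if padd k l = m then of_real (cf k l) * \<omega> k * \<omega> l else 0))"
    by (intro sum.cong refl) (simp add: p cfk c)
  also have "\<dots> = cnj (nonlin K \<omega> m)"
    unfolding nonlin_alt by (simp add: cnj_sum)
  finally show ?thesis .
qed

lemma inner_zero:
  assumes tp: "trig_poly K \<omega>" and k: "k \<in> Kset K"
  shows "(\<Sum>l\<in>Kset K. cnj (\<omega> (padd k l)) * (of_real (cf k l) * \<omega> k * \<omega> l)) = 0"
proof -
  define \<sigma> where "\<sigma> l = kneg (padd k l)" for l
  have c: "cnj (\<omega> (padd k l)) = \<omega> (\<sigma> l)" for l
    using tp unfolding trig_poly_def \<sigma>_def by (metis complex_cnj_cnj)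
  have z: "\<omega> x = 0" if "x \<notin> Kset K" for x using tp that unfolding trig_poly_def by blast
  have ss: "\<sigma> (\<sigma> l) = l" for l unfolding \<sigma>_def kneg_def padd_def by simp
  have cs: "cf k (\<sigma> l) = - cf k l" for l unfolding \<sigma>_def kneg_def padd_def cf_def
    by (simp add: minus_divide_left algebra_simps)
  define S where "S = {l\<in>Kset K. \<sigma> l \<in> Kset K}"
  define A where "A = (\<Sum>l\<in>S. \<omega> (\<sigma> l) * (of_real (cf k l) * \<omega> k * \<omega> l))"
  have "(\<Sum>l\<in>Kset K. cnj (\<omega> (padd k l)) * (of_real (cf k l) * \<omega> k * \<omega> l))
      = (\<Sum>l\<in>Kset K. \<omega> (\<sigma> l) * (of_real (cf k l) * \<omega> k * \<omega> l))" by (simp add: c)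
  also have "\<dots> = A" unfolding A_def
    by (rule sum.mono_neutral_right) (auto simp: finite_Kset S_def z)
  finally have e1: "(\<Sum>l\<in>Kset K. cnj (\<omega> (padd k l)) * (of_real (cf k l) * \<omega> k * \<omega> l)) = A" .
  have "A = (\<Sum>l\<in>S. - (\<omega> (\<sigma> l) * (of_real (cf k l) * \<omega> k * \<omega> l)))" unfolding A_def
    by (rule sum.reindex_bij_witness[where i=\<sigma> and j=\<sigma>]) (auto simp: S_def ss cs)
  also have "\<dots> = - A" unfolding A_def by (simp add: sum_negf)
  finally have "A = 0" by simp
  then show ?thesis using e1 by simp
qed

lemma nonlin_orth:
  assumes tp: "trig_poly K \<omega>"
  shows "(\<Sum>m\<in>Kset K. cnj (\<omega> m) * nonlin K \<omega> m) = 0"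
proof -
  have z: "\<omega> x = 0" if "x \<notin> Kset K" for x using tp that unfolding trig_poly_def by blast
  have "(\<Sum>m\<in>Kset K. cnj (\<omega> m) * nonlin K \<omega> m) =
     (\<Sum>m\<in>Kset K. \<Sum>k\<in>Kset K. \<Sum>l\<in>Kset K. if padd k l = m then cnj (\<omega> m) * (of_real (cf k l) * \<omega> k * \<omega> l) else 0)"
    unfolding nonlin_alt sum_distrib_left by (intro sum.cong refl) auto
  also have "\<dots> = (\<Sum>k\<in>Kset K. \<Sum>l\<in>Kset K. \<Sum>m\<in>Kset K. if padd k l = m then cnj (\<omega> m) * (of_real (cf k l) * \<omega> k * \<omega> l) else 0)"
    by (subst sum.swap, rule sum.cong, rule refl, rule sum.swap)
  also have "\<dots> = (\<Sum>k\<in>Kset K. \<Sum>l\<in>Kset K. cnj (\<omega> (padd k l)) * (of_real (cf k l) * \<omega> k * \<omega> l))"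
    by (intro sum.cong refl) (auto simp: finite_Kset z)
  also have "\<dots> = 0" by (intro sum.neutral ballI inner_zero[OF tp])
  finally show ?thesis .
qed


lemma curl_kneg:
  assumes "force_ok K lamM f"
  shows "curl_coef f (kneg k) = cnj (curl_coef f k)"
proof -
  have "f (kneg k) = (cnj (fst (f k)), cnj (snd (f k)))" using assms unfolding force_ok_def by blast
  then show ?thesis unfolding curl_coef_def kneg_def by simp
qed

lemma step_trig:
  assumes fo: "force_ok K lamM f" and tp: "trig_poly K \<omega>"
  shows "trig_poly K (stepS K \<nu> (curl_coef f) h \<omega>)"
proof -
  have c: "\<omega> (kneg k) = cnj (\<omega> k)" for k using tp unfolding trig_poly_def by blast
  show ?thesis unfolding trig_poly_def
  proof (intro conjI allI impI)
    fix k show "k \<notin> Kset K \<Longrightarrow> stepS K \<nu> (curl_coef f) h \<omega> k = 0" unfolding stepS_def by simp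
  next
    fix k
    show "stepS K \<nu> (curl_coef f) h \<omega> (kneg k) = cnj (stepS K \<nu> (curl_coef f) h \<omega> k)"
      unfolding stepS_def
      by (simp add: kneg_Kset[symmetric] nonlin_kneg[OF tp] curl_kneg[OF fo] c)
  qed
qed

lemma cmod_diff_sq: "(cmod (a - of_real h * b))\<^sup>2 = (cmod a)\<^sup>2 - 2 * h * Re (cnj a * b) + h\<^sup>2 * (cmod b)\<^sup>2"
  unfolding cmod_power2 by (simp add: power2_eq_square algebra_simps)

lemma exp_sinh: "exp (- (x::real)) * sinh x = (1 - exp (- (2 * x))) / 2"
proof -
  have "exp (-x) * exp (-x) = exp (- (2*x))" by (simp add: mult_exp_exp)
  moreover have "exp (-x) * exp x = 1" by (simp add: exp_minus_inverse mult.commute)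
  ultimately show ?thesis unfolding sinh_def by (simp add: algebra_simps diff_divide_distrib)
qed

lemma one_minus_exp: "y \<ge> 0 \<Longrightarrow> 1 - exp (- y) \<le> (y::real)"
  using exp_ge_add_one_self[of "-y"] by linarith

lemma forcing_bound:
  assumes "\<nu> > 0" "h > 0" "q \<ge> 1"
  shows "cmod (2 * g / of_real (\<nu> * q) * of_real (exp (- \<nu> * q * h / 2) * sinh (\<nu> * q * h / 2))) \<le> h * cmod g"
proof -
  define y where "y = \<nu> * q * h"
  have y0: "y \<ge> 0" using assms unfolding y_def by simp
  have e: "exp (- \<nu> * q * h / 2) * sinh (\<nu> * q * h / 2) = (1 - exp (- y)) / 2"
    using exp_sinh[of "\<nu> * q * h / 2"] unfolding y_def by simp
  have nn: "0 \<le> 1 - exp (- y)" using y0 by simp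
  have nq: "\<nu> * q > 0" using assms by simp
  have "cmod (2 * g / of_real (\<nu> * q) * of_real (exp (- \<nu> * q * h / 2) * sinh (\<nu> * q * h / 2)))
      = cmod g * (1 - exp (- y)) / (\<nu> * q)"
    unfolding e norm_mult norm_divide norm_of_real using nn nq by simp
  also have "\<dots> \<le> cmod g * y / (\<nu> * q)"
    using one_minus_exp[OF y0] nq by (intro divide_right_mono mult_left_mono) auto
  also have "\<dots> = h * cmod g" unfolding y_def using assms by simp
  finally show ?thesis .
qed

definition rn :: "nat \<Rightarrow> (int \<times> int \<Rightarrow> complex) \<Rightarrow> real" where
  "rn K \<omega> = L2_set (\<lambda>k. cmod (\<omega> k)) (Kset K)"

lemma rn_sq: "(rn K \<omega>)\<^sup>2 = (\<Sum>k\<in>Kset K. (cmod (\<omega> k))\<^sup>2)"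
  unfolding rn_def L2_set_def by (simp add: sum_nonneg)

lemma energy:
  assumes fo: "force_ok K lamM f" and tp: "trig_poly K \<omega>" and nu: "\<nu> > 0" and h: "h > 0"
  shows "rn K (stepS K \<nu> (curl_coef f) h \<omega>) \<le>
     exp (- \<nu> * h) * sqrt ((rn K \<omega>)\<^sup>2 + h\<^sup>2 * (\<Sum>m\<in>Kset K. (cmod (nonlin K \<omega> m))\<^sup>2))
     + h * rn K (curl_coef f)"
proof -
  define a where "a k = \<omega> k - of_real h * nonlin K \<omega> k" for k
  define g where "g = curl_coef f"
  have pt: "cmod (stepS K \<nu> g h \<omega> k) \<le> exp (- \<nu> * h) * cmod (a k) + h * cmod (g k)"
    if k: "k \<in> Kset K" for k
  proof -
    have q: "ksq k \<ge> 1" using ksq_ge1 k by auto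
    have "exp (- \<nu> * ksq k * h) \<le> exp (- \<nu> * h)"
      using q nu h by (simp add: mult_le_cancel_left1 mult.commute mult.left_commute)
    then have "cmod (a k * of_real (exp (- \<nu> * ksq k * h))) \<le> exp (- \<nu> * h) * cmod (a k)"
      by (simp add: norm_mult mult.commute mult_left_mono)
    moreover have "cmod (2 * g k / of_real (\<nu> * ksq k) * of_real (exp (- \<nu> * ksq k * h / 2) * sinh (\<nu> * ksq k * h / 2)))
       \<le> h * cmod (g k)" by (rule forcing_bound[OF nu h q])
    ultimately show ?thesis unfolding stepS_def a_def[symmetric] using k
      by (smt (verit) norm_triangle_ineq)
  qed
  have "rn K (stepS K \<nu> g h \<omega>) \<le> L2_set (\<lambda>k. exp (- \<nu> * h) * cmod (a k) + h * cmod (g k)) (Kset K)"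
    unfolding rn_def by (rule L2_set_mono) (use pt in blast, simp)
  also have "\<dots> \<le> L2_set (\<lambda>k. exp (- \<nu> * h) * cmod (a k)) (Kset K) + L2_set (\<lambda>k. h * cmod (g k)) (Kset K)"
    by (rule L2_set_triangle_ineq)
  also have "\<dots> = exp (- \<nu> * h) * rn K a + h * rn K g"
    unfolding rn_def using h by (simp add: L2_set_right_distrib)
  also have "rn K a = sqrt ((rn K \<omega>)\<^sup>2 + h\<^sup>2 * (\<Sum>m\<in>Kset K. (cmod (nonlin K \<omega> m))\<^sup>2))"
  proof -
    have "(\<Sum>k\<in>Kset K. Re (cnj (\<omega> k) * nonlin K \<omega> k)) = Re (\<Sum>k\<in>Kset K. cnj (\<omega> k) * nonlin K \<omega> k)"
      by (simp add: Re_sum)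
    also have "\<dots> = 0" using nonlin_orth[OF tp] by simp
    finally have z: "(\<Sum>k\<in>Kset K. Re (cnj (\<omega> k) * nonlin K \<omega> k)) = 0" .
    have "(rn K a)\<^sup>2 = (\<Sum>k\<in>Kset K. (cmod (\<omega> k))\<^sup>2 - 2 * h * Re (cnj (\<omega> k) * nonlin K \<omega> k) + h\<^sup>2 * (cmod (nonlin K \<omega> k))\<^sup>2)"
      unfolding rn_sq a_def cmod_diff_sq ..
    also have "\<dots> = (rn K \<omega>)\<^sup>2 + h\<^sup>2 * (\<Sum>m\<in>Kset K. (cmod (nonlin K \<omega> m))\<^sup>2)"
      unfolding rn_sq sum.distrib sum_subtractf sum_distrib_left[symmetric] using z
      by (simp add: sum_distrib_left)
    finally show ?thesis
      by (metis rn_def L2_set_nonneg real_sqrt_unique)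
  qed
  finally show ?thesis unfolding g_def .
qed


lemma nonlin_bound:
  "cmod (nonlin K \<omega> m) \<le> real (card (Kset K)) * real (card (Kset K)) * (2 * real K ^ 2) * (rn K \<omega>)\<^sup>2"
proof -
  let ?r = "rn K \<omega>"
  have mem: "cmod (\<omega> k) \<le> ?r" if "k \<in> Kset K" for k
    unfolding rn_def using member_le_L2_set[OF finite_Kset that] .
  have "cmod (nonlin K \<omega> m) \<le> (\<Sum>k\<in>Kset K. cmod (\<Sum>l\<in>Kset K.
      if padd k l = m then of_real (cf k l) * \<omega> k * \<omega> l else 0))"
    unfolding nonlin_alt by (rule norm_sum)
  also have "\<dots> \<le> (\<Sum>k\<in>Kset K. \<Sum>l\<in>Kset K.
      cmod (if padd k l = m then of_real (cf k l) * \<omega> k * \<omega> l else 0))"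
    by (intro sum_mono norm_sum)
  also have "\<dots> \<le> (\<Sum>k\<in>Kset K. \<Sum>l\<in>Kset K. (2 * real K ^ 2) * (?r * ?r))"
  proof (intro sum_mono)
    fix k l assume k: "k \<in> Kset K" and l: "l \<in> Kset K"
    have "\<bar>cf k l\<bar> * (cmod (\<omega> k) * cmod (\<omega> l)) \<le> (2 * real K ^ 2) * (?r * ?r)"
      using cf_bound[OF k l] mem[OF k] mem[OF l]
      by (intro mult_mono) (auto intro: mult_mono simp: rn_def)
    then show "cmod (if padd k l = m then of_real (cf k l) * \<omega> k * \<omega> l else 0) \<le> (2 * real K ^ 2) * (?r * ?r)"
      by (auto simp: norm_mult mult.assoc)
  qed
  also have "\<dots> = real (card (Kset K)) * real (card (Kset K)) * (2 * real K ^ 2) * (?r)\<^sup>2"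
    by (simp add: power2_eq_square)
  finally show ?thesis .
qed

definition Dc :: "nat \<Rightarrow> real" where
  "Dc K = real (card (Kset K)) * (real (card (Kset K)) * real (card (Kset K)) * (2 * real K ^ 2))\<^sup>2"

lemma Dc_nonneg: "Dc K \<ge> 0" unfolding Dc_def by simp

lemma nonlin_sq_bound:
  "(\<Sum>m\<in>Kset K. (cmod (nonlin K \<omega> m))\<^sup>2) \<le> Dc K * (rn K \<omega>)\<^sup>2 * (rn K \<omega>)\<^sup>2"
proof -
  let ?C = "real (card (Kset K)) * real (card (Kset K)) * (2 * real K ^ 2)"
  have "(\<Sum>m\<in>Kset K. (cmod (nonlin K \<omega> m))\<^sup>2) \<le> (\<Sum>m\<in>Kset K. (?C * (rn K \<omega>)\<^sup>2)\<^sup>2)"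
    by (intro sum_mono power_mono nonlin_bound) simp
  also have "\<dots> = Dc K * (rn K \<omega>)\<^sup>2 * (rn K \<omega>)\<^sup>2"
    unfolding Dc_def by (simp add: power2_eq_square)
  finally show ?thesis .
qed

lemma aux_sq: assumes "(x::real) \<ge> 0" shows "1 + x \<le> (1 + x)\<^sup>2"
proof -
  have "(1+x)\<^sup>2 = 1 + x + x*(1+x)" by (simp add: power2_eq_square algebra_simps)
  moreover have "x*(1+x) \<ge> 0" using assms by simp
  ultimately show ?thesis by linarith
qed

lemma contract:
  assumes fo: "force_ok K lamM f" and tp: "trig_poly K \<omega>" and nu: "\<nu> > 0" and h: "h > 0"
    and R: "rn K \<omega> \<le> R" and small: "\<nu> * h \<le> 1" and hc: "h * (Dc K * R\<^sup>2 + \<nu>\<^sup>2 / 2) \<le> \<nu> / 2"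
  shows "rn K (stepS K \<nu> (curl_coef f) h \<omega>) \<le> (1 - \<nu> * h / 2) * rn K \<omega> + h * rn K (curl_coef f)"
proof -
  let ?r = "rn K \<omega>"
  define E where "E = Dc K * R\<^sup>2"
  have r0: "?r \<ge> 0" unfolding rn_def by simp
  have E0: "E \<ge> 0" unfolding E_def using Dc_nonneg by simp
  have rr: "?r\<^sup>2 \<le> R\<^sup>2" using r0 R by (simp add: power_mono)
  have "?r\<^sup>2 + h\<^sup>2 * (\<Sum>m\<in>Kset K. (cmod (nonlin K \<omega> m))\<^sup>2) \<le> ?r\<^sup>2 + h\<^sup>2 * (Dc K * ?r\<^sup>2 * ?r\<^sup>2)"
    using nonlin_sq_bound[of K \<omega>] by (intro add_left_mono mult_left_mono) auto
  also have "\<dots> \<le> ?r\<^sup>2 + h\<^sup>2 * (Dc K * R\<^sup>2 * ?r\<^sup>2)"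
    using rr Dc_nonneg[of K] by (intro add_left_mono mult_left_mono mult_right_mono) auto
  also have "\<dots> = ?r\<^sup>2 * (1 + h\<^sup>2 * E)" unfolding E_def by (simp add: algebra_simps)
  also have "\<dots> \<le> ?r\<^sup>2 * (1 + h\<^sup>2 * E)\<^sup>2"
  proof -
    have x0: "0 \<le> h\<^sup>2 * E" using E0 by simp
    have "1 + h\<^sup>2 * E \<le> (1 + h\<^sup>2 * E)\<^sup>2" by (rule aux_sq[OF x0])
    then show ?thesis by (intro mult_left_mono) auto
  qed
  also have "\<dots> = (?r * (1 + h\<^sup>2 * E))\<^sup>2" by (simp add: power_mult_distrib)
  finally have s: "sqrt (?r\<^sup>2 + h\<^sup>2 * (\<Sum>m\<in>Kset K. (cmod (nonlin K \<omega> m))\<^sup>2)) \<le> ?r * (1 + h\<^sup>2 * E)"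
    using r0 E0 by (simp add: real_sqrt_le_iff real_le_lsqrt)
  have ex: "exp (- \<nu> * h) * (1 + \<nu> * h) \<le> 1"
  proof -
    have "1 + \<nu> * h \<le> exp (\<nu> * h)" by simp
    then have "exp (- \<nu> * h) * (1 + \<nu> * h) \<le> exp (- \<nu> * h) * exp (\<nu> * h)"
      by (intro mult_left_mono) auto
    also have "\<dots> = 1" by (simp add: exp_minus_inverse mult.commute)
    finally show ?thesis .
  qed
  have q: "1 + h\<^sup>2 * E \<le> (1 - \<nu> * h / 2) * (1 + \<nu> * h)"
  proof -
    have "h * (h * (E + \<nu>\<^sup>2 / 2)) \<le> h * (\<nu> / 2)" using hc h unfolding E_def
      by (intro mult_left_mono) auto
    moreover have "(1 - \<nu>*h/2)*(1+\<nu>*h) - (1 + h\<^sup>2*E) = h*(\<nu>/2) - h*(h*(E+\<nu>\<^sup>2/2))"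
      by (simp add: power2_eq_square field_simps)
    ultimately show ?thesis by linarith
  qed
  have "exp (- \<nu> * h) * (1 + h\<^sup>2 * E) \<le> exp (- \<nu> * h) * ((1 - \<nu> * h / 2) * (1 + \<nu> * h))"
    using q by (intro mult_left_mono) auto
  also have "\<dots> = (exp (- \<nu> * h) * (1 + \<nu> * h)) * (1 - \<nu> * h / 2)" by simp
  also have "\<dots> \<le> 1 * (1 - \<nu> * h / 2)" using ex small by (intro mult_right_mono) auto
  finally have ee: "exp (- \<nu> * h) * (1 + h\<^sup>2 * E) \<le> (1 - \<nu> * h / 2)"
    by simp
  have "exp (- \<nu> * h) * sqrt (?r\<^sup>2 + h\<^sup>2 * (\<Sum>m\<in>Kset K. (cmod (nonlin K \<omega> m))\<^sup>2))
      \<le> exp (- \<nu> * h) * (?r * (1 + h\<^sup>2 * E))" using s by (intro mult_left_mono) auto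
  also have "\<dots> \<le> (1 - \<nu> * h / 2) * ?r"
  proof -
    have "exp (- \<nu> * h) * (?r * (1 + h\<^sup>2 * E)) = (exp (- \<nu> * h) * (1 + h\<^sup>2 * E)) * ?r"
      by (simp only: mult_ac)
    also have "\<dots> \<le> (1 - \<nu> * h / 2) * ?r" using ee r0 by (rule mult_right_mono)
    finally show ?thesis .
  qed
  finally show ?thesis using energy[OF fo tp nu h] by linarith
qed


lemma exists_force:
  assumes fo: "force_ok K lamM f" and nz: "f \<noteq> (\<lambda>_. (0, 0))"
  shows "\<exists>k\<in>Kset K. f k \<noteq> (0,0)"
proof -
  have "\<exists>k. f k \<noteq> (0,0)"
  proof (rule ccontr)
    assume "\<not> (\<exists>k. f k \<noteq> (0,0))"
    then have "f = (\<lambda>_. (0,0))" by auto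
    with nz show False by simp
  qed
  then obtain k where "f k \<noteq> (0,0)" by blast
  moreover then have "k \<in> Kset K" using fo unfolding force_ok_def by blast
  ultimately show ?thesis by blast
qed

lemma lambda0_1:
  assumes "k \<in> Kset K" shows "lambda0 K = 1"
proof -
  have "K \<ge> 1" using assms unfolding Kset_def by (cases k) auto
  then have m: "(1,0) \<in> Kset K" unfolding Kset_def by auto
  show ?thesis unfolding lambda0_def
  proof (rule Min_eqI)
    show "finite (ksq ` Kset K)" using finite_Kset by simp
    show "\<And>y. y \<in> ksq ` Kset K \<Longrightarrow> 1 \<le> y" using ksq_ge1 by auto
    show "1 \<in> ksq ` Kset K" using m by (force simp: ksq_def)
  qed
qed

lemma vnorm_rn: "vnorm K \<omega> = 2 * pi * rn K \<omega>"
proof -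
  have e: "4 * pi\<^sup>2 = (2 * pi)\<^sup>2" by (simp add: power2_eq_square)
  have "vnorm K \<omega> = sqrt ((2 * pi)\<^sup>2) * sqrt (\<Sum>k\<in>Kset K. (cmod (\<omega> k))\<^sup>2)"
    unfolding vnorm_def e real_sqrt_mult ..
  moreover have "sqrt ((2 * pi)\<^sup>2) = 2 * pi" by (subst real_sqrt_abs) simp
  ultimately show ?thesis unfolding rn_def L2_set_def by (simp only:)
qed

definition Fn :: "nat \<Rightarrow> (int \<times> int \<Rightarrow> complex \<times> complex) \<Rightarrow> real" where
  "Fn K f = sqrt (\<Sum>k\<in>Kset K. (cmod (fst (f k)))\<^sup>2 + (cmod (snd (f k)))\<^sup>2)"

lemma Fn_pos:
  assumes fo: "force_ok K lamM f" and nz: "f \<noteq> (\<lambda>_. (0, 0))"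
  shows "Fn K f > 0"
proof -
  obtain k where k: "k \<in> Kset K" "f k \<noteq> (0,0)" using exists_force[OF fo nz] by blast
  have "(cmod (fst (f k)))\<^sup>2 + (cmod (snd (f k)))\<^sup>2 > 0" using k(2)
    by (cases "f k") (auto simp: add_pos_nonneg add_nonneg_pos)
  moreover have "(cmod (fst (f k)))\<^sup>2 + (cmod (snd (f k)))\<^sup>2 \<le> (\<Sum>k\<in>Kset K. (cmod (fst (f k)))\<^sup>2 + (cmod (snd (f k)))\<^sup>2)"
    by (rule member_le_sum) (auto simp: k finite_Kset)
  ultimately show ?thesis unfolding Fn_def by simp
qed

lemma int_abs_le_sq: "\<bar>real_of_int a\<bar> \<le> (real_of_int a)\<^sup>2"
proof (cases "a = 0")
  case False
  then have "1 \<le> \<bar>a\<bar>" by arith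
  then have x: "1 \<le> \<bar>real_of_int a\<bar>" by (metis of_int_1 of_int_abs of_int_le_iff)
  have "\<bar>real_of_int a\<bar> * 1 \<le> \<bar>real_of_int a\<bar> * \<bar>real_of_int a\<bar>"
    using x by (intro mult_left_mono) auto
  also have "\<dots> = (real_of_int a)\<^sup>2" by (simp add: power2_eq_square abs_mult[symmetric])
  finally show ?thesis by simp
qed simp

lemma G_bound:
  assumes fo: "force_ok K lamM f" and lam: "lamM \<ge> 1"
  shows "rn K (curl_coef f) \<le> 2 * lamM * Fn K f"
proof -
  have pt: "(cmod (curl_coef f k))\<^sup>2 \<le> (2 * lamM)\<^sup>2 * ((cmod (fst (f k)))\<^sup>2 + (cmod (snd (f k)))\<^sup>2)"
    if k: "k \<in> Kset K" for k
  proof (cases "ksq k > lamM")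
    case True
    then have "f k = (0,0)" using fo unfolding force_ok_def by blast
    then show ?thesis unfolding curl_coef_def by simp
  next
    case False
    let ?a = "cmod (fst (f k))" and ?b = "cmod (snd (f k))"
    have kk: "ksq k = (real_of_int (fst k))\<^sup>2 + (real_of_int (snd k))\<^sup>2" unfolding ksq_def by simp
    have s1: "(real_of_int (fst k))\<^sup>2 \<le> lamM" "(real_of_int (snd k))\<^sup>2 \<le> lamM"
      using False kk zero_le_power2[of "real_of_int (snd k)"] zero_le_power2[of "real_of_int (fst k)"]
      by linarith+
    have k1: "\<bar>real_of_int (fst k)\<bar> \<le> lamM" using s1 int_abs_le_sq[of "fst k"] by linarith
    have k2: "\<bar>real_of_int (snd k)\<bar> \<le> lamM" using s1 int_abs_le_sq[of "snd k"] by linarith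
    have "cmod (curl_coef f k) \<le> cmod (\<i> * of_int (fst k) * snd (f k)) + cmod (\<i> * of_int (snd k) * fst (f k))"
      unfolding curl_coef_def by (rule norm_triangle_ineq4)
    also have "\<dots> = \<bar>real_of_int (fst k)\<bar> * ?b + \<bar>real_of_int (snd k)\<bar> * ?a"
      by (simp add: norm_mult)
    also have "\<dots> \<le> lamM * ?b + lamM * ?a"
      using k1 k2 by (intro add_mono mult_right_mono) auto
    finally have c: "cmod (curl_coef f k) \<le> lamM * (?a + ?b)" by (simp add: algebra_simps)
    have "(cmod (curl_coef f k))\<^sup>2 \<le> (lamM * (?a + ?b))\<^sup>2"
      using c by (intro power_mono) auto
    also have "\<dots> = lamM\<^sup>2 * (?a + ?b)\<^sup>2" by (simp add: power_mult_distrib)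
    also have "\<dots> \<le> lamM\<^sup>2 * (4 * (?a\<^sup>2 + ?b\<^sup>2))"
    proof -
      have "0 \<le> (?a - ?b)\<^sup>2" by simp
      then have h1: "2 * (?a * ?b) \<le> ?a * ?a + ?b * ?b" by (simp add: power2_eq_square algebra_simps)
      have h2: "(?a + ?b)\<^sup>2 = ?a * ?a + ?b * ?b + 2 * (?a * ?b)" by (simp add: power2_eq_square algebra_simps)
      have h3: "4 * (?a\<^sup>2 + ?b\<^sup>2) = 4 * (?a * ?a) + 4 * (?b * ?b)" by (simp add: power2_eq_square)
      have h4: "0 \<le> ?a * ?a" "0 \<le> ?b * ?b" by simp_all
      have "(?a + ?b)\<^sup>2 \<le> 4 * (?a\<^sup>2 + ?b\<^sup>2)" using h1 h2 h3 h4 by linarith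
      then show ?thesis by (intro mult_left_mono) auto
    qed
    also have "\<dots> = (2 * lamM)\<^sup>2 * (?a\<^sup>2 + ?b\<^sup>2)" by (simp add: power_mult_distrib)
    finally show ?thesis .
  qed
  have "rn K (curl_coef f) = sqrt (\<Sum>k\<in>Kset K. (cmod (curl_coef f k))\<^sup>2)" unfolding rn_def L2_set_def ..
  also have "\<dots> \<le> sqrt (\<Sum>k\<in>Kset K. (2 * lamM)\<^sup>2 * ((cmod (fst (f k)))\<^sup>2 + (cmod (snd (f k)))\<^sup>2))"
    by (intro real_sqrt_le_mono sum_mono pt)
  also have "\<dots> = sqrt ((2 * lamM)\<^sup>2) * Fn K f" unfolding Fn_def
    by (simp add: sum_distrib_left[symmetric] real_sqrt_mult)
  also have "\<dots> = 2 * lamM * Fn K f" using lam by (subst real_sqrt_abs) simp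
  finally show ?thesis .
qed


theorem lemma1:
  fixes \<nu> lamM c0 :: real and K :: nat and f :: "int \<times> int \<Rightarrow> complex \<times> complex"
  assumes "\<nu> > 0" and "lamM \<ge> 1" and "force_ok K lamM f" and "f \<noteq> (\<lambda>_. (0, 0))"
    and "c0 > 6 * lamM / lambda0 K"
  shows "\<forall>L>0. \<exists>h0>0. \<forall>h. 0 < h \<and> h \<le> h0 \<longrightarrow>
           (\<exists>N::nat. \<forall>\<omega>0. trig_poly K \<omega>0 \<and> vnorm K \<omega>0 < L \<longrightarrow>
              (\<forall>n\<ge>N. vnorm K ((stepS K \<nu> (curl_coef f) h ^^ n) \<omega>0)
                        < c0 * force_norm K f / (\<nu> * sqrt (lambda0 K))))"
proof (intro allI impI)
  fix L :: real assume L: "L > 0"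
  note nu = \<open>\<nu> > 0\<close> and lam = \<open>lamM \<ge> 1\<close> and fo = \<open>force_ok K lamM f\<close>
  obtain k0 where "k0 \<in> Kset K" using exists_force[OF fo \<open>f \<noteq> _\<close>] by blast
  then have l0: "lambda0 K = 1" by (rule lambda0_1)
  have c0: "c0 > 6 * lamM" using \<open>c0 > 6 * lamM / lambda0 K\<close> l0 by simp
  define F where "F = Fn K f"
  have F0: "F > 0" unfolding F_def by (rule Fn_pos[OF fo \<open>f \<noteq> _\<close>])
  define G where "G = rn K (curl_coef f)"
  have G0: "G \<ge> 0" unfolding G_def rn_def by simp
  have GF: "G \<le> 2 * lamM * F" unfolding G_def F_def by (rule G_bound[OF fo lam])
  define T where "T = c0 * F / \<nu>"
  define rs where "rs = 2 * G / \<nu>"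
  have rs0: "rs \<ge> 0" unfolding rs_def using G0 nu by simp
  have "2 * G \<le> 4 * lamM * F" using GF by (simp add: mult_ac)
  also have "\<dots> < c0 * F" using c0 F0 lam by (intro mult_strict_right_mono) auto
  finally have rsT: "rs < T" unfolding rs_def T_def using nu by (simp add: divide_strict_right_mono)
  define R where "R = max (L / (2 * pi)) T"
  have TR: "T \<le> R" unfolding R_def by simp
  have R0: "R > 0" using rsT rs0 TR by linarith
  define D where "D = Dc K"
  have D0: "D \<ge> 0" unfolding D_def by (rule Dc_nonneg)
  define X where "X = D * R\<^sup>2 + \<nu>\<^sup>2 / 2"
  have X0: "X > 0" unfolding X_def using D0 nu by (simp add: add_nonneg_pos)
  define h0 where "h0 = min (1 / \<nu>) ((\<nu> / 2) / X)"
  have "h0 > 0" unfolding h0_def using nu X0 by simp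
  moreover have "\<forall>h. 0 < h \<and> h \<le> h0 \<longrightarrow>
           (\<exists>N::nat. \<forall>\<omega>0. trig_poly K \<omega>0 \<and> vnorm K \<omega>0 < L \<longrightarrow>
              (\<forall>n\<ge>N. vnorm K ((stepS K \<nu> (curl_coef f) h ^^ n) \<omega>0)
                        < c0 * force_norm K f / (\<nu> * sqrt (lambda0 K))))"
  proof (intro allI impI)
    fix h assume hh: "0 < h \<and> h \<le> h0"
    then have h: "h > 0" by simp
    have small: "\<nu> * h \<le> 1"
    proof -
      have "h \<le> 1 / \<nu>" using hh unfolding h0_def by simp
      then show ?thesis using nu by (simp add: field_simps)
    qed
    have hc: "h * (Dc K * R\<^sup>2 + \<nu>\<^sup>2 / 2) \<le> \<nu> / 2"
    proof -
      have "h \<le> (\<nu> / 2) / X" using hh unfolding h0_def by simp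
      then have "h * X \<le> \<nu> / 2" using X0 by (simp add: field_simps)
      then show ?thesis unfolding X_def D_def .
    qed
    define \<rho> where "\<rho> = 1 - \<nu> * h / 2"
    have \<rho>0: "\<rho> \<ge> 0" unfolding \<rho>_def using small by simp
    have \<rho>1: "\<rho> < 1" unfolding \<rho>_def using nu h by simp
    have hG: "h * G = (1 - \<rho>) * rs" unfolding \<rho>_def rs_def using nu by (simp add: field_simps)
    obtain N where N: "\<rho> ^ N < (T - rs) / R"
      using real_arch_pow_inv[of "(T - rs) / R" \<rho>] rsT R0 \<rho>1 by auto
    show "\<exists>N::nat. \<forall>\<omega>0. trig_poly K \<omega>0 \<and> vnorm K \<omega>0 < L \<longrightarrow>
              (\<forall>n\<ge>N. vnorm K ((stepS K \<nu> (curl_coef f) h ^^ n) \<omega>0)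
                        < c0 * force_norm K f / (\<nu> * sqrt (lambda0 K)))"
    proof (intro exI allI impI)
      fix \<omega>0 n assume w0: "trig_poly K \<omega>0 \<and> vnorm K \<omega>0 < L" and nN: "N \<le> n"
      define w where "w m = (stepS K \<nu> (curl_coef f) h ^^ m) \<omega>0" for m
      have inv: "trig_poly K (w m) \<and> rn K (w m) \<le> R \<and> rn K (w m) - rs \<le> \<rho> ^ m * R" for m
      proof (induction m)
        case 0
        have "2 * pi * rn K \<omega>0 < L" using w0 vnorm_rn by metis
        then have "rn K \<omega>0 < L / (2 * pi)" by (simp add: field_simps)
        then have "rn K \<omega>0 \<le> R" unfolding R_def by simp
        then show ?case using w0 rs0 unfolding w_def by simp
      next
        case (Suc m)
        have ws: "w (Suc m) = stepS K \<nu> (curl_coef f) h (w m)" unfolding w_def by simp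
        have tp: "trig_poly K (w (Suc m))" unfolding ws using step_trig[OF fo] Suc.IH by blast
        have c: "rn K (w (Suc m)) \<le> \<rho> * rn K (w m) + (1 - \<rho>) * rs"
          unfolding ws using contract[OF fo _ nu h _ small hc] Suc.IH hG
          unfolding \<rho>_def G_def by simp
        have a1: "\<rho> * rn K (w m) \<le> \<rho> * R" using Suc.IH \<rho>0 by (intro mult_left_mono) auto
        have a2: "(1 - \<rho>) * rs \<le> (1 - \<rho>) * R" using rsT TR \<rho>1 by (intro mult_left_mono) auto
        have a3: "\<rho> * (rn K (w m) - rs) \<le> \<rho> * (\<rho> ^ m * R)" using Suc.IH \<rho>0 by (intro mult_left_mono) auto
        have "rn K (w (Suc m)) \<le> R" using c a1 a2 by (simp add: algebra_simps)
        moreover have "rn K (w (Suc m)) - rs \<le> \<rho> ^ Suc m * R" using c a3 by (simp add: algebra_simps)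
        ultimately show ?case using tp by simp
      qed
      have "\<rho> ^ n \<le> \<rho> ^ N" using \<rho>0 \<rho>1 nN by (intro power_decreasing) auto
      then have "\<rho> ^ n * R \<le> \<rho> ^ N * R" using R0 by (intro mult_right_mono) auto
      also have "\<rho> ^ N * R < T - rs" using N R0 by (simp add: field_simps)
      finally have "rn K (w n) < T" using inv[of n] by linarith
      then have "2 * pi * rn K (w n) < 2 * pi * T" by simp
      moreover have "c0 * force_norm K f / (\<nu> * sqrt (lambda0 K)) = 2 * pi * T"
        unfolding l0 T_def F_def Fn_def force_norm_def by simp
      ultimately show "vnorm K ((stepS K \<nu> (curl_coef f) h ^^ n) \<omega>0)
                        < c0 * force_norm K f / (\<nu> * sqrt (lambda0 K))"
        using vnorm_rn unfolding w_def by metis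
    qed
  qed
  ultimately show "\<exists>h0>0. \<forall>h. 0 < h \<and> h \<le> h0 \<longrightarrow>
           (\<exists>N::nat. \<forall>\<omega>0. trig_poly K \<omega>0 \<and> vnorm K \<omega>0 < L \<longrightarrow>
              (\<forall>n\<ge>N. vnorm K ((stepS K \<nu> (curl_coef f) h ^^ n) \<omega>0)
                        < c0 * force_norm K f / (\<nu> * sqrt (lambda0 K))))" by blast
qed

end
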